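(* Let $X$ be a complex Hilbert space with inner product $(\cdot,\cdot)_X$ and norm $\|\cdot\|_X$. Let $\mathbb{U}\ni\boldsymbol y\mapsto f(\boldsymbol y)\in X$ be $(\boldsymbol b,p,\varepsilon)$-holomorphic and continuous when $\mathbb{U}$ is equipped with the product topology. Then the map $\mathbb{U}\ni\boldsymbol y\mapsto\|f(\boldsymbol y)\|_X^2\in\mathbb{R}$ is $(\boldsymbol b,p,\varepsilon)$-holomorphic and continuous with the same $\boldsymbol b\in\ell^p(\mathbb{N})$, $p\in(0,1)$ and $\varepsilon>0$.
   Context: $\mathbb{U}=[-1,1]^{\mathbb{N}}$. For $s>1$ let $\mathcal{E}_s=\{(z+z^{-1})/2: z\in\mathbb{C},\ 1\le|z|\le s\}$; for a sequence $\boldsymbol\rho=(\rho_j)_{j\ge1}$ with $\rho_j>1$ let $\mathcal{E}_{\boldsymbol\rho}=\bigotimes_{j\ge1}\mathcal{E}_{\rho_j}$ and $\mathcal{O}_{\boldsymbol\rho}=\bigotimes_{j\ge1}\mathcal{O}_{\rho_j}$ with $\mathcal{O}_{\rho}=\{z\in\mathbb{C}:\operatorname{dist}(z,[-1,1])<\rho-1\}$. For a complex Banach space $Y$, $\boldsymbol b\in\ell^p(\mathbb{N})$ with $p\in(0,1)$ (nonincreasing) and $\varepsilon>0$, a map $g:\mathbb{U}\to Y$ is $(\boldsymbol b,p,\varepsilon)$-holomorphic if: (1) it is uniformly bounded on $\mathbb{U}$; (2) for every sequence $\boldsymbol\rho$ of numbers strictly larger than one with $\sum_{j\ge1}(\rho_j-1)b_j\le\varepsilon$,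 $g$ admits an extension $\boldsymbol z\mapsto g(\boldsymbol z)$ to $\mathcal{O}_{\boldsymbol\rho}$ that is holomorphic with respect to each variable $z_j$; (3) there is $C_\varepsilon>0$ with $\sup_{\boldsymbol z\in\mathcal{E}_{\boldsymbol\rho}}\|g(\boldsymbol z)\|_Y\le C_\varepsilon$. For real-valued maps, $Y=\mathbb{C}$ is used for the extension. *)

theory Defs
  imports "HOL-Analysis.Analysis"
begin

text \<open>A complex vector space structure on a real normed space is encoded by a
real-linear map J playing the role of multiplication by the imaginary unit:
(a + i b) x = a x + b (J x).  For the scalar field itself, J = (\<lambda>z. \<i> * z).\<close>

definition cscale :: "('y::real_vector \<Rightarrow> 'y) \<Rightarrow> complex \<Rightarrow> 'y \<Rightarrow> 'y" where
  "cscale J c x = Re c *\<^sub>R x + Im c *\<^sub>R J x"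

definition cdifferentiable_at ::
  "('y::real_normed_vector \<Rightarrow> 'y) \<Rightarrow> (complex \<Rightarrow> 'y) \<Rightarrow> complex \<Rightarrow> bool" where
  "cdifferentiable_at J F w \<longleftrightarrow> (\<exists>v. (F has_derivative (\<lambda>h. cscale J h v)) (at w))"

definition UU :: "(nat \<Rightarrow> real) set" where
  "UU = {y. \<forall>j. \<bar>y j\<bar> \<le> 1}"

definition bernstein_ellipse :: "real \<Rightarrow> complex set" where
  "bernstein_ellipse s = {(z + inverse z) / 2 | z. 1 \<le> norm z \<and> norm z \<le> s}"

definition interval_nbhd :: "real \<Rightarrow> complex set" where
  "interval_nbhd r = {z. infdist z (complex_of_real ` {-1..1}) < r - 1}"

definition poly_ellipse :: "(nat \<Rightarrow> real) \<Rightarrow> (nat \<Rightarrow> complex) set" where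
  "poly_ellipse \<rho> = {z. \<forall>j. z j \<in> bernstein_ellipse (\<rho> j)}"

definition poly_nbhd :: "(nat \<Rightarrow> real) \<Rightarrow> (nat \<Rightarrow> complex) set" where
  "poly_nbhd \<rho> = {z. \<forall>j. z j \<in> interval_nbhd (\<rho> j)}"

text \<open>The standing conditions on b, p, \<epsilon> are hypotheses of the theorem.
The sum condition is: \<Sum>(\<rho>_j - 1) b_j \<le> \<epsilon> (a series of nonnegative terms, so it
means summable with sum \<le> \<epsilon>).\<close>
definition bpe_holomorphic ::
  "('y::real_normed_vector \<Rightarrow> 'y) \<Rightarrow> (nat \<Rightarrow> real) \<Rightarrow> real \<Rightarrow> ((nat \<Rightarrow> real) \<Rightarrow> 'y) \<Rightarrow> bool" where
  "bpe_holomorphic J b \<epsilon> g \<longleftrightarrow>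
     (\<exists>C. \<forall>y\<in>UU. norm (g y) \<le> C) \<and>
     (\<exists>C\<^sub>\<epsilon>>0. \<forall>\<rho>. (\<forall>j. \<rho> j > 1) \<and> summable (\<lambda>j. (\<rho> j - 1) * b j)
                    \<and> (\<Sum>j. (\<rho> j - 1) * b j) \<le> \<epsilon> \<longrightarrow>
        (\<exists>G :: (nat \<Rightarrow> complex) \<Rightarrow> 'y.
            (\<forall>y\<in>UU. G (\<lambda>j. complex_of_real (y j)) = g y) \<and>
            (\<forall>z\<in>poly_nbhd \<rho>. \<forall>j. \<forall>w\<in>interval_nbhd (\<rho> j). cdifferentiable_at J (\<lambda>u. G (z(j := u))) w) \<and>
            (\<forall>z\<in>poly_ellipse \<rho>. norm (G z) \<le> C\<^sub>\<epsilon>)))"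

end

theory Submission
  imports Defs
begin

lemma infdist_cnj: "infdist (cnj z) (complex_of_real ` {-1..1}) = infdist z (complex_of_real ` {-1..1})"
proof -
  have "(\<lambda>a. dist (cnj z) a) ` (complex_of_real ` {-1..1}) = (\<lambda>a. dist z a) ` (complex_of_real ` {-1..1})"
  proof (rule image_cong[OF refl])
    fix a assume "a \<in> complex_of_real ` {-1..1}"
    then obtain t where a: "a = complex_of_real t" by auto
    have "dist (cnj z) a = cmod (cnj (z - a))" by (simp add: dist_norm a)
    also have "\<dots> = dist z a" by (simp only: complex_mod_cnj dist_norm)
    finally show "dist (cnj z) a = dist z a" .
  qed
  then show ?thesis unfolding infdist_def by simp
qed

lemma interval_nbhd_cnj: "w \<in> interval_nbhd r \<Longrightarrow> cnj w \<in> interval_nbhd r"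
  unfolding interval_nbhd_def using infdist_cnj by simp

lemma bernstein_cnj: "w \<in> bernstein_ellipse r \<Longrightarrow> cnj w \<in> bernstein_ellipse r"
proof -
  assume "w \<in> bernstein_ellipse r"
  then obtain z where z: "w = (z + inverse z) / 2" "1 \<le> norm z" "norm z \<le> r"
    unfolding bernstein_ellipse_def by auto
  have "cnj w = (cnj z + inverse (cnj z)) / 2" by (simp add: z complex_cnj_inverse)
  then show ?thesis unfolding bernstein_ellipse_def using z by force
qed

lemma cscale_complex: "cscale (\<lambda>z. \<i> * z) h c = h * c"
  unfolding cscale_def by (simp add: complex_eq_iff)

theorem lemmaA1:
  fixes J :: "'x::{real_inner, complete_space} \<Rightarrow> 'x"
    and f :: "(nat \<Rightarrow> real) \<Rightarrow> 'x"
    and b :: "nat \<Rightarrow> real" and p \<epsilon> :: real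
  assumes J_linear: "linear J"
    and J_square: "\<And>x. J (J x) = - x"
    and J_isometric: "\<And>x y. inner (J x) (J y) = inner x y"
    and p: "0 < p" "p < 1"
    and b_lp: "summable (\<lambda>j. \<bar>b j\<bar> powr p)"
    and b_noninc: "decseq b"
    and eps: "\<epsilon> > 0"
    and f_holo: "bpe_holomorphic J b \<epsilon> f"
    and f_cont: "continuous_on UU f"
  shows "bpe_holomorphic (\<lambda>z::complex. \<i> * z) b \<epsilon> (\<lambda>y. complex_of_real ((norm (f y))\<^sup>2))
         \<and> continuous_on UU (\<lambda>y. (norm (f y))\<^sup>2)"
proof -
  have Jnorm: "norm (J x) = norm x" for x
    using J_isometric[of x x] by (simp add: norm_eq_sqrt_inner)
  have Jbl: "bounded_linear J"
    by (rule bounded_linear_intro[where K=1]) (auto simp: Jnorm linear_add[OF J_linear] linear_scale[OF J_linear])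
  have Jskew: "inner (J x) y = - inner x (J y)" for x y
    using J_isometric[of "J x" y] J_square[of x] by simp
  have Jxx: "inner x (J x) = 0" for x
    using Jskew[of x x] by (simp add: inner_commute)
  have Jadd: "J (x + y) = J x + J y" and Jscale: "J (a *\<^sub>R x) = a *\<^sub>R J x" and Jminus: "J (- x) = - J x" for x y a
    using J_linear by (auto simp: linear_add linear_scale linear_neg)
  define B where "B x y = complex_of_real (inner x y) + \<i> * complex_of_real (inner x (J y))" for x y
  have Bxx: "B x x = complex_of_real ((norm x)\<^sup>2)" for x
    by (simp add: B_def Jxx power2_norm_eq_inner)
  have Bbound: "norm (B x y) \<le> 2 * norm x * norm y" for x y
  proof -
    have "norm (B x y) \<le> \<bar>inner x y\<bar> + \<bar>inner x (J y)\<bar>"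
      unfolding B_def by (rule order_trans[OF norm_triangle_ineq]) (simp add: norm_mult)
    also have "\<dots> \<le> norm x * norm y + norm x * norm (J y)"
      by (intro add_mono Cauchy_Schwarz_ineq2)
    finally show ?thesis by (simp add: Jnorm)
  qed
  have "\<exists>C. \<forall>y\<in>UU. norm (f y) \<le> C" using f_holo unfolding bpe_holomorphic_def by (rule conjunct1)
  then obtain C0 where C0: "\<forall>y\<in>UU. norm (f y) \<le> C0" by blast
  have H: "\<exists>C\<^sub>\<epsilon>>0. \<forall>\<rho>. (\<forall>j. \<rho> j > 1) \<and> summable (\<lambda>j. (\<rho> j - 1) * b j)
                    \<and> (\<Sum>j. (\<rho> j - 1) * b j) \<le> \<epsilon> \<longrightarrow>
        (\<exists>G :: (nat \<Rightarrow> complex) \<Rightarrow> 'x.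
            (\<forall>y\<in>UU. G (\<lambda>j. complex_of_real (y j)) = f y) \<and>
            (\<forall>z\<in>poly_nbhd \<rho>. \<forall>j. \<forall>w\<in>interval_nbhd (\<rho> j). cdifferentiable_at J (\<lambda>u. G (z(j := u))) w) \<and>
            (\<forall>z\<in>poly_ellipse \<rho>. norm (G z) \<le> C\<^sub>\<epsilon>))"
    using f_holo unfolding bpe_holomorphic_def by (rule conjunct2)
  from H obtain C where Cpos: "C > 0" and HC: "\<forall>\<rho>. (\<forall>j. \<rho> j > 1) \<and> summable (\<lambda>j. (\<rho> j - 1) * b j)
                    \<and> (\<Sum>j. (\<rho> j - 1) * b j) \<le> \<epsilon> \<longrightarrow>
        (\<exists>G :: (nat \<Rightarrow> complex) \<Rightarrow> 'x.
            (\<forall>y\<in>UU. G (\<lambda>j. complex_of_real (y j)) = f y) \<and>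
            (\<forall>z\<in>poly_nbhd \<rho>. \<forall>j. \<forall>w\<in>interval_nbhd (\<rho> j). cdifferentiable_at J (\<lambda>u. G (z(j := u))) w) \<and>
            (\<forall>z\<in>poly_ellipse \<rho>. norm (G z) \<le> C))" using H by (elim exE conjE) (rule that)
  have part1: "\<exists>C. \<forall>y\<in>UU. norm (complex_of_real ((norm (f y))\<^sup>2)) \<le> C"
  proof (intro exI ballI)
    fix y assume "y \<in> UU"
    then have "norm (f y) \<le> C0" using C0 by blast
    then show "norm (complex_of_real ((norm (f y))\<^sup>2)) \<le> C0\<^sup>2"
      by (simp add: norm_power power_mono del: of_real_power)
  qed
  have part2: "\<exists>C\<^sub>\<epsilon>>0. \<forall>\<rho>. (\<forall>j. \<rho> j > 1) \<and> summable (\<lambda>j. (\<rho> j - 1) * b j)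
                    \<and> (\<Sum>j. (\<rho> j - 1) * b j) \<le> \<epsilon> \<longrightarrow>
        (\<exists>G :: (nat \<Rightarrow> complex) \<Rightarrow> complex.
            (\<forall>y\<in>UU. G (\<lambda>j. complex_of_real (y j)) = complex_of_real ((norm (f y))\<^sup>2)) \<and>
            (\<forall>z\<in>poly_nbhd \<rho>. \<forall>j. \<forall>w\<in>interval_nbhd (\<rho> j). cdifferentiable_at (\<lambda>z::complex. \<i> * z) (\<lambda>u. G (z(j := u))) w) \<and>
            (\<forall>z\<in>poly_ellipse \<rho>. norm (G z) \<le> C\<^sub>\<epsilon>))"
  proof (rule exI[where x="2 * C\<^sup>2 + 1"], rule conjI)
    show "2 * C\<^sup>2 + 1 > 0" by (simp add: add_nonneg_pos)
  next
    show "\<forall>\<rho>. (\<forall>j. \<rho> j > 1) \<and> summable (\<lambda>j. (\<rho> j - 1) * b j)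
                    \<and> (\<Sum>j. (\<rho> j - 1) * b j) \<le> \<epsilon> \<longrightarrow>
        (\<exists>G :: (nat \<Rightarrow> complex) \<Rightarrow> complex.
            (\<forall>y\<in>UU. G (\<lambda>j. complex_of_real (y j)) = complex_of_real ((norm (f y))\<^sup>2)) \<and>
            (\<forall>z\<in>poly_nbhd \<rho>. \<forall>j. \<forall>w\<in>interval_nbhd (\<rho> j). cdifferentiable_at (\<lambda>z::complex. \<i> * z) (\<lambda>u. G (z(j := u))) w) \<and>
            (\<forall>z\<in>poly_ellipse \<rho>. norm (G z) \<le> 2 * C\<^sup>2 + 1))"
    proof (intro allI impI)
    fix \<rho> :: "nat \<Rightarrow> real"
    assume "(\<forall>j. \<rho> j > 1) \<and> summable (\<lambda>j. (\<rho> j - 1) * b j) \<and> (\<Sum>j. (\<rho> j - 1) * b j) \<le> \<epsilon>"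
    from HC this have EG: "\<exists>G :: (nat \<Rightarrow> complex) \<Rightarrow> 'x.
            (\<forall>y\<in>UU. G (\<lambda>j. complex_of_real (y j)) = f y) \<and>
            (\<forall>z\<in>poly_nbhd \<rho>. \<forall>j. \<forall>w\<in>interval_nbhd (\<rho> j). cdifferentiable_at J (\<lambda>u. G (z(j := u))) w) \<and>
            (\<forall>z\<in>poly_ellipse \<rho>. norm (G z) \<le> C)" by (rule mp[OF spec[where x=\<rho>]])
    then obtain G where G1: "\<forall>y\<in>UU. G (\<lambda>j. complex_of_real (y j)) = f y"
      and G2: "\<forall>z\<in>poly_nbhd \<rho>. \<forall>j. \<forall>w\<in>interval_nbhd (\<rho> j). cdifferentiable_at J (\<lambda>u. G (z(j := u))) w"
      and G3: "\<forall>z\<in>poly_ellipse \<rho>. norm (G z) \<le> C" by (elim exE conjE) (rule that)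
    define K where "K z = B (G z) (G (\<lambda>j. cnj (z j)))" for z
    show "\<exists>G :: (nat \<Rightarrow> complex) \<Rightarrow> complex.
            (\<forall>y\<in>UU. G (\<lambda>j. complex_of_real (y j)) = complex_of_real ((norm (f y))\<^sup>2)) \<and>
            (\<forall>z\<in>poly_nbhd \<rho>. \<forall>j. \<forall>w\<in>interval_nbhd (\<rho> j). cdifferentiable_at (\<lambda>z::complex. \<i> * z) (\<lambda>u. G (z(j := u))) w) \<and>
            (\<forall>z\<in>poly_ellipse \<rho>. norm (G z) \<le> 2 * C\<^sup>2 + 1)"
    proof (rule exI[where x=K], intro conjI ballI allI)
      fix y assume "y \<in> UU"
      then show "K (\<lambda>j. complex_of_real (y j)) = complex_of_real ((norm (f y))\<^sup>2)"
        using G1 by (simp add: K_def Bxx)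
    next
      fix z assume "z \<in> poly_ellipse \<rho>"
      then have "(\<lambda>j. cnj (z j)) \<in> poly_ellipse \<rho>"
        by (simp add: poly_ellipse_def bernstein_cnj)
      with \<open>z \<in> poly_ellipse \<rho>\<close> G3 have n1: "norm (G z) \<le> C" and n2: "norm (G (\<lambda>j. cnj (z j))) \<le> C"
        by auto
      have "norm (K z) \<le> 2 * norm (G z) * norm (G (\<lambda>j. cnj (z j)))"
        unfolding K_def by (rule Bbound)
      also have "\<dots> \<le> 2 * C * C"
        using n1 n2 Cpos by (intro mult_left_mono mult_mono) auto
      finally show "norm (K z) \<le> 2 * C\<^sup>2 + 1" by (simp add: power2_eq_square)
    next
      fix z j w assume z: "z \<in> poly_nbhd \<rho>" and w: "w \<in> interval_nbhd (\<rho> j)"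
      define z' where "z' = (\<lambda>j. cnj (z j))"
      have z': "z' \<in> poly_nbhd \<rho>" using z by (simp add: z'_def poly_nbhd_def interval_nbhd_cnj)
      have w': "cnj w \<in> interval_nbhd (\<rho> j)" using w by (rule interval_nbhd_cnj)
      obtain v1 where d1: "((\<lambda>u. G (z(j := u))) has_derivative (\<lambda>h. cscale J h v1)) (at w)"
        using G2 z w unfolding cdifferentiable_at_def by blast
      obtain v2 where d2: "((\<lambda>u. G (z'(j := u))) has_derivative (\<lambda>h. cscale J h v2)) (at (cnj w))"
        using G2 z' w' unfolding cdifferentiable_at_def by blast
      have d2': "((\<lambda>u. G (z'(j := cnj u))) has_derivative (\<lambda>h. cscale J (cnj h) v2)) (at w)"
        using diff_chain_at[OF bounded_linear_imp_has_derivative[OF bounded_linear_cnj] d2]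
        by (simp add: o_def)
      have eqf: "(\<lambda>u. K (z(j := u))) = (\<lambda>u. B (G (z(j := u))) (G (z'(j := cnj u))))"
      proof
        fix u
        have "(\<lambda>i. cnj ((z(j := u)) i)) = z'(j := cnj u)" by (auto simp: z'_def)
        then show "K (z(j := u)) = B (G (z(j := u))) (G (z'(j := cnj u)))" by (simp add: K_def)
      qed
      define x1 where "x1 = G (z(j := w))"
      define y2 where "y2 = G (z'(j := cnj w))"
      define c where "c = B v1 y2 + B x1 v2"
      have dB: "((\<lambda>u. B (G (z(j := u))) (G (z'(j := cnj u))))
         has_derivative (\<lambda>h. complex_of_real (inner x1 (cscale J (cnj h) v2) + inner (cscale J h v1) y2)
            + \<i> * complex_of_real (inner x1 (J (cscale J (cnj h) v2)) + inner (cscale J h v1) (J y2)))) (at w)"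
      proof -
        have i1: "((\<lambda>u. inner (G (z(j := u))) (G (z'(j := cnj u)))) has_derivative
            (\<lambda>h. inner x1 (cscale J (cnj h) v2) + inner (cscale J h v1) y2)) (at w)"
          using has_derivative_inner[OF d1 d2'] by (simp add: x1_def y2_def)
        have d2J: "((\<lambda>u. J (G (z'(j := cnj u)))) has_derivative (\<lambda>h. J (cscale J (cnj h) v2))) (at w)"
          by (rule bounded_linear.has_derivative[OF Jbl d2'])
        have i2: "((\<lambda>u. inner (G (z(j := u))) (J (G (z'(j := cnj u))))) has_derivative
            (\<lambda>h. inner x1 (J (cscale J (cnj h) v2)) + inner (cscale J h v1) (J y2))) (at w)"
          using has_derivative_inner[OF d1 d2J] by (simp add: x1_def y2_def)
        show ?thesis
          unfolding B_def
          by (intro has_derivative_add has_derivative_mult_right has_derivative_of_real i1 i2)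
      qed
      have eqd: "(\<lambda>h. complex_of_real (inner x1 (cscale J (cnj h) v2) + inner (cscale J h v1) y2)
            + \<i> * complex_of_real (inner x1 (J (cscale J (cnj h) v2)) + inner (cscale J h v1) (J y2)))
           = (\<lambda>h. cscale (\<lambda>z. \<i> * z) h c)"
      proof
        fix h :: complex
        show "complex_of_real (inner x1 (cscale J (cnj h) v2) + inner (cscale J h v1) y2)
            + \<i> * complex_of_real (inner x1 (J (cscale J (cnj h) v2)) + inner (cscale J h v1) (J y2))
           = cscale (\<lambda>z. \<i> * z) h c"
        proof -
          have e1: "inner x1 (cscale J (cnj h) v2) = Re h * inner x1 v2 - Im h * inner x1 (J v2)"
            by (simp add: cscale_def inner_add_right inner_diff_right)
          have e2: "inner (cscale J h v1) y2 = Re h * inner v1 y2 - Im h * inner v1 (J y2)"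
            by (simp add: cscale_def inner_add_left Jskew)
          have e3: "inner x1 (J (cscale J (cnj h) v2)) = Re h * inner x1 (J v2) + Im h * inner x1 v2"
            by (simp add: cscale_def inner_add_right inner_diff_right Jadd Jscale J_square linear_diff[OF J_linear])
          have e4: "inner (cscale J h v1) (J y2) = Re h * inner v1 (J y2) + Im h * inner v1 y2"
            by (simp add: cscale_def inner_add_left J_isometric)
          show ?thesis
            unfolding cscale_complex c_def B_def e1 e2 e3 e4
            by (simp add: complex_eq_iff algebra_simps)
        qed
      qed
      show "cdifferentiable_at (\<lambda>z. \<i> * z) (\<lambda>u. K (z(j := u))) w"
        unfolding cdifferentiable_at_def eqf using dB eqd by metis
    qed
    qed
  qed
  have cont: "continuous_on UU (\<lambda>y. (norm (f y))\<^sup>2)"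
    by (intro continuous_intros f_cont)
  show ?thesis
    unfolding bpe_holomorphic_def using part1 part2 cont by (intro conjI) assumption+
qed

end
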